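(* For every positive integer $k$, any randomized distributed algorithm in the LOCAL model that, for every assignment of unique identifiers, finds a proper $3$-coloring of $G_k$ with success probability greater than $1/2$ requires at least $k$ rounds.
   Context: The outerplanar graphs $G_k$ are defined inductively. $G_0$ has vertex set $\{v_0,u_0\}$ and the single edge $\{v_0,u_0\}$. For $i\ge 1$, $G_i$ is obtained from $G_{i-1}$ by adding six new vertices $a_i,b_i,c_i,d_i,v_i,u_i$ and the edges $\{a_i,b_i\},\{c_i,d_i\},\{a_i,v_i\},\{b_i,v_i\},\{c_i,u_i\},\{d_i,u_i\},\{a_i,v_{i-1}\},\{b_i,v_{i-1}\},\{c_i,u_{i-1}\},\{d_i,u_{i-1}\}$. LOCAL model: the network is the graph, each vertex has a unique identifier, and in synchronous rounds each vertex receives the previous round's messages, computes arbitrarily (possibly using random bits) and sends messages of unbounded size to its neighbors; at the end each vertex outputs its color. A proper $3$-coloring assigns colors in $\{1,2,3\}$ with adjacent vertices colored differently. *)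

theory Defs
  imports "HOL-Probability.Probability"
begin

text \<open>Vertices of the graphs G_k. GV i and GU i are v_i and u_i (i >= 0);
  GA i, GB i, GC i, GD i are a_i, b_i, c_i, d_i (i >= 1).\<close>
datatype gvert = GA nat | GB nat | GC nat | GD nat | GV nat | GU nat

definition gverts :: "nat \<Rightarrow> gvert set" where
  "gverts k = {GV 0, GU 0} \<union>
     (\<Union>i\<in>{1..k}. {GA i, GB i, GC i, GD i, GV i, GU i})"

definition layer_edges :: "nat \<Rightarrow> gvert set set" where
  "layer_edges i = {{GA i, GB i}, {GC i, GD i}, {GA i, GV i}, {GB i, GV i},
     {GC i, GU i}, {GD i, GU i}, {GA i, GV (i - 1)}, {GB i, GV (i - 1)},
     {GC i, GU (i - 1)}, {GD i, GU (i - 1)}}"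

definition gedges :: "nat \<Rightarrow> gvert set set" where
  "gedges k = {{GV 0, GU 0}} \<union> (\<Union>i\<in>{1..k}. layer_edges i)"

definition gadj :: "nat \<Rightarrow> gvert \<Rightarrow> gvert \<Rightarrow> bool" where
  "gadj k x y \<longleftrightarrow> {x, y} \<in> gedges k"

definition proper3 :: "nat \<Rightarrow> (gvert \<Rightarrow> nat) \<Rightarrow> bool" where
  "proper3 k c \<longleftrightarrow> (\<forall>v\<in>gverts k. c v \<in> {1, 2, 3}) \<and>
                     (\<forall>u v. gadj k u v \<longrightarrow> c u \<noteq> c v)"

text \<open>A vertex starts in state
  init (its identifier) (its private infinite sequence of random bits).
  In each round, every vertex u sends to each neighbour w the message
  msg (state of u) (identifier of w); every vertex w then updates its state by
  step (old state) (set of pairs (sender identifier, message received)).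
  ident is the identifier assignment, \<omega> the random bits of all vertices.\<close>
fun lstate :: "nat \<Rightarrow> (nat \<Rightarrow> (nat \<Rightarrow> bool) \<Rightarrow> 's) \<Rightarrow> ('s \<Rightarrow> (nat \<times> 'm) set \<Rightarrow> 's)
    \<Rightarrow> ('s \<Rightarrow> nat \<Rightarrow> 'm) \<Rightarrow> (gvert \<Rightarrow> nat) \<Rightarrow> (gvert \<Rightarrow> nat \<Rightarrow> bool) \<Rightarrow> nat \<Rightarrow> gvert \<Rightarrow> 's"
where
  "lstate k init step msg ident \<omega> 0 v = init (ident v) (\<omega> v)"
| "lstate k init step msg ident \<omega> (Suc t) v =
     step (lstate k init step msg ident \<omega> t v)
       {(ident u, msg (lstate k init step msg ident \<omega> t u) (ident v)) | u. gadj k u v}"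

definition coins :: "(nat \<Rightarrow> bool) measure" where
  "coins = PiM UNIV (\<lambda>_::nat. measure_pmf (bernoulli_pmf (1/2)))"

definition rand_space :: "nat \<Rightarrow> (gvert \<Rightarrow> nat \<Rightarrow> bool) measure" where
  "rand_space k = PiM (gverts k) (\<lambda>_. coins)"

definition success_prob :: "nat \<Rightarrow> (nat \<Rightarrow> (nat \<Rightarrow> bool) \<Rightarrow> 's) \<Rightarrow> ('s \<Rightarrow> (nat \<times> 'm) set \<Rightarrow> 's)
    \<Rightarrow> ('s \<Rightarrow> nat \<Rightarrow> 'm) \<Rightarrow> ('s \<Rightarrow> nat) \<Rightarrow> (gvert \<Rightarrow> nat) \<Rightarrow> nat \<Rightarrow> real" where
  "success_prob k init step msg out ident t =
     measure (rand_space k)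
       {\<omega> \<in> space (rand_space k).
          proper3 k (\<lambda>v. out (lstate k init step msg ident \<omega> t v))}"

end

theory Submission
  imports Defs
begin

fun lev :: "gvert \<Rightarrow> int" where
  "lev (GV i) = 2 * int i" | "lev (GU i) = 2 * int i"
| "lev (GA i) = 2 * int i - 1" | "lev (GB i) = 2 * int i - 1"
| "lev (GC i) = 2 * int i - 1" | "lev (GD i) = 2 * int i - 1"

fun sw :: "gvert \<Rightarrow> gvert" where
  "sw (GV i) = GU i" | "sw (GU i) = GV i"
| "sw (GA i) = GC i" | "sw (GB i) = GD i"
| "sw (GC i) = GA i" | "sw (GD i) = GB i"

lemma sw_sw[simp]: "sw (sw x) = x" by (cases x) auto
lemma lev_sw[simp]: "lev (sw x) = lev x" by (cases x) auto

lemma doubleton_eq: "{u, v} = {x, y} \<longleftrightarrow> (u = x \<and> v = y) \<or> (u = y \<and> v = x)"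
  by (auto simp: doubleton_eq_iff)

lemma gadj_lev: "gadj k u v \<Longrightarrow> \<bar>lev u - lev v\<bar> \<le> 1"
  unfolding gadj_def gedges_def layer_edges_def
  by (auto simp: doubleton_eq_iff)

lemma sw_layer: "e \<in> layer_edges i \<Longrightarrow> sw ` e \<in> layer_edges i"
  unfolding layer_edges_def by (elim insertE emptyE) (simp_all add: doubleton_eq_iff)
lemma sw_edges: "e \<in> gedges k \<Longrightarrow> sw ` e \<in> gedges k"
  unfolding gedges_def using sw_layer by (auto simp: doubleton_eq_iff)

lemma gadj_sw: "gadj k (sw u) (sw v) = gadj k u v"
proof
  assume "gadj k (sw u) (sw v)"
  then have "sw ` {sw u, sw v} \<in> gedges k" unfolding gadj_def by (rule sw_edges)
  then show "gadj k u v" by (simp add: gadj_def)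
next
  assume "gadj k u v"
  then have "sw ` {u, v} \<in> gedges k" unfolding gadj_def by (rule sw_edges)
  then show "gadj k (sw u) (sw v)" by (simp add: gadj_def)
qed

lemma sw_gverts: "sw x \<in> gverts k \<longleftrightarrow> x \<in> gverts k"
  unfolding gverts_def by (cases x) auto

lemma locality:
  assumes "\<forall>y. \<bar>lev y - lev x\<bar> \<le> int s \<longrightarrow> i1 y = i2 y \<and> w1 y = w2 y"
  shows "lstate k init step msg i1 w1 s x = lstate k init step msg i2 w2 s x"
  using assms
proof (induction s arbitrary: x)
  case 0
  then show ?case by simp
next
  case (Suc s)
  have hx: "lstate k init step msg i1 w1 s x = lstate k init step msg i2 w2 s x"
    using Suc.prems by (intro Suc.IH) auto
  have hu: "lstate k init step msg i1 w1 s u = lstate k init step msg i2 w2 s u \<and> i1 u = i2 u"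
    if "gadj k u x" for u
  proof -
    have l: "\<bar>lev u - lev x\<bar> \<le> 1" using gadj_lev[OF that] .
    have "lstate k init step msg i1 w1 s u = lstate k init step msg i2 w2 s u"
      using Suc.prems l by (intro Suc.IH) auto
    moreover have "i1 u = i2 u" using Suc.prems l by auto
    ultimately show ?thesis by simp
  qed
  have ix: "i1 x = i2 x" using Suc.prems by auto
  have "{(i1 u, msg (lstate k init step msg i1 w1 s u) (i1 x)) | u. gadj k u x}
      = {(i2 u, msg (lstate k init step msg i2 w2 s u) (i2 x)) | u. gadj k u x}"
    using hu ix by (auto; metis)
  then show ?case using hx by simp
qed

lemma automorph:
  "lstate k init step msg (i \<circ> sw) (w \<circ> sw) s x = lstate k init step msg i w s (sw x)"
proof (induction s arbitrary: x)
  case 0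
  then show ?case by simp
next
  case (Suc s)
  have "{((i \<circ> sw) u, msg (lstate k init step msg (i \<circ> sw) (w \<circ> sw) s u) ((i \<circ> sw) x)) | u. gadj k u x}
      = {(i u, msg (lstate k init step msg i w s u) (i (sw x))) | u. gadj k u (sw x)}"
  proof (intro set_eqI iffI)
    fix z assume "z \<in> {((i \<circ> sw) u, msg (lstate k init step msg (i \<circ> sw) (w \<circ> sw) s u) ((i \<circ> sw) x)) | u. gadj k u x}"
    then obtain u where "gadj k u x" "z = ((i \<circ> sw) u, msg (lstate k init step msg (i \<circ> sw) (w \<circ> sw) s u) ((i \<circ> sw) x))" by blast
    then show "z \<in> {(i u, msg (lstate k init step msg i w s u) (i (sw x))) | u. gadj k u (sw x)}"
      using Suc.IH gadj_sw by auto
  next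
    fix z assume "z \<in> {(i u, msg (lstate k init step msg i w s u) (i (sw x))) | u. gadj k u (sw x)}"
    then obtain u where u: "gadj k u (sw x)" "z = (i u, msg (lstate k init step msg i w s u) (i (sw x)))" by blast
    have "gadj k (sw u) x" using u(1) gadj_sw[of k "sw u" x] by simp
    moreover have "z = ((i \<circ> sw) (sw u), msg (lstate k init step msg (i \<circ> sw) (w \<circ> sw) s (sw u)) ((i \<circ> sw) x))"
      using u(2) Suc.IH[of "sw u"] by (simp add: comp_def)
    ultimately show "z \<in> {((i \<circ> sw) u, msg (lstate k init step msg (i \<circ> sw) (w \<circ> sw) s u) ((i \<circ> sw) x)) | u. gadj k u x}"
      by blast
  qed
  then show ?case using Suc.IH by simp
qed

lemma memV: "i \<le> k \<Longrightarrow> GV i \<in> gverts k" by (cases i) (auto simp: gverts_def)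
lemma memU: "i \<le> k \<Longrightarrow> GU i \<in> gverts k" by (cases i) (auto simp: gverts_def)
lemma memA: "1 \<le> i \<Longrightarrow> i \<le> k \<Longrightarrow> GA i \<in> gverts k \<and> GB i \<in> gverts k \<and> GC i \<in> gverts k \<and> GD i \<in> gverts k"
  by (auto simp: gverts_def)
lemma edgesL: "1 \<le> i \<Longrightarrow> i \<le> k \<Longrightarrow> e \<in> layer_edges i \<Longrightarrow> e \<in> gedges k"
  by (auto simp: gedges_def)
lemma col3: "a \<in> {1,2,3} \<Longrightarrow> b \<in> {1,2,3} \<Longrightarrow> p \<in> {1,2,3} \<Longrightarrow> q \<in> {1,2,3::nat}
  \<Longrightarrow> a \<noteq> b \<Longrightarrow> a \<noteq> p \<Longrightarrow> b \<noteq> p \<Longrightarrow> a \<noteq> q \<Longrightarrow> b \<noteq> q \<Longrightarrow> q = p"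
  by auto

lemma chainV:
  assumes "proper3 k c" shows "i \<le> k \<Longrightarrow> c (GV i) = c (GV 0)"
proof (induction i)
  case 0 then show ?case by simp
next
  case (Suc i)
  have m: "GA (Suc i) \<in> gverts k" "GB (Suc i) \<in> gverts k" "GV (Suc i) \<in> gverts k" "GV i \<in> gverts k"
    using Suc.prems memA[of "Suc i" k] memV[of "Suc i" k] memV[of i k] by auto
  have l: "{GA (Suc i), GB (Suc i)} \<in> layer_edges (Suc i)" "{GA (Suc i), GV i} \<in> layer_edges (Suc i)"
    "{GB (Suc i), GV i} \<in> layer_edges (Suc i)" "{GA (Suc i), GV (Suc i)} \<in> layer_edges (Suc i)"
    "{GB (Suc i), GV (Suc i)} \<in> layer_edges (Suc i)"
    unfolding layer_edges_def by auto
  have e: "gadj k (GA (Suc i)) (GB (Suc i))" "gadj k (GA (Suc i)) (GV i)" "gadj k (GB (Suc i)) (GV i)"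
     "gadj k (GA (Suc i)) (GV (Suc i))" "gadj k (GB (Suc i)) (GV (Suc i))"
    using Suc.prems edgesL[OF _ _ l(1)] edgesL[OF _ _ l(2)] edgesL[OF _ _ l(3)] edgesL[OF _ _ l(4)] edgesL[OF _ _ l(5)]
    unfolding gadj_def by auto
  from assms have p: "\<forall>v\<in>gverts k. c v \<in> {1, 2, 3}" "\<forall>u v. gadj k u v \<longrightarrow> c u \<noteq> c v"
    unfolding proper3_def by auto
  have "c (GV (Suc i)) = c (GV i)"
    by (rule col3[of "c (GA (Suc i))" "c (GB (Suc i))"]) (use p m e in auto)
  then show ?case using Suc by simp
qed

lemma chainU:
  assumes "proper3 k c" shows "i \<le> k \<Longrightarrow> c (GU i) = c (GU 0)"
proof (induction i)
  case 0 then show ?case by simp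
next
  case (Suc i)
  have m: "GC (Suc i) \<in> gverts k" "GD (Suc i) \<in> gverts k" "GU (Suc i) \<in> gverts k" "GU i \<in> gverts k"
    using Suc.prems memA[of "Suc i" k] memU[of "Suc i" k] memU[of i k] by auto
  have l: "{GC (Suc i), GD (Suc i)} \<in> layer_edges (Suc i)" "{GC (Suc i), GU i} \<in> layer_edges (Suc i)"
    "{GD (Suc i), GU i} \<in> layer_edges (Suc i)" "{GC (Suc i), GU (Suc i)} \<in> layer_edges (Suc i)"
    "{GD (Suc i), GU (Suc i)} \<in> layer_edges (Suc i)"
    unfolding layer_edges_def by auto
  have e: "gadj k (GC (Suc i)) (GD (Suc i))" "gadj k (GC (Suc i)) (GU i)" "gadj k (GD (Suc i)) (GU i)"
     "gadj k (GC (Suc i)) (GU (Suc i))" "gadj k (GD (Suc i)) (GU (Suc i))"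
    using Suc.prems edgesL[OF _ _ l(1)] edgesL[OF _ _ l(2)] edgesL[OF _ _ l(3)] edgesL[OF _ _ l(4)] edgesL[OF _ _ l(5)]
    unfolding gadj_def by auto
  from assms have p: "\<forall>v\<in>gverts k. c v \<in> {1, 2, 3}" "\<forall>u v. gadj k u v \<longrightarrow> c u \<noteq> c v"
    unfolding proper3_def by auto
  have "c (GU (Suc i)) = c (GU i)"
    by (rule col3[of "c (GC (Suc i))" "c (GD (Suc i))"]) (use p m e in auto)
  then show ?case using Suc by simp
qed

lemma base_ne: "proper3 k c \<Longrightarrow> c (GV 0) \<noteq> c (GU 0)"
  unfolding proper3_def gadj_def gedges_def by auto

definition phi :: "gvert \<Rightarrow> nat" where
  "phi x = (case x of GA i \<Rightarrow> 6*i | GB i \<Rightarrow> 6*i+1 | GC i \<Rightarrow> 6*i+2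
     | GD i \<Rightarrow> 6*i+3 | GV i \<Rightarrow> 6*i+4 | GU i \<Rightarrow> 6*i+5)"

lemma inj_phi: "inj phi"
  by (intro injI) (auto simp: phi_def split: gvert.splits; presburger)

definition swt :: "nat \<Rightarrow> gvert \<Rightarrow> gvert" where
  "swt t x = (if lev x > int t then sw x else x)"

lemma swt_swt[simp]: "swt t (swt t x) = x"
  by (simp add: swt_def)

lemma inj_swt: "inj (swt t)"
  by (metis injI swt_swt)

lemma swt_gverts: "swt t x \<in> gverts k \<longleftrightarrow> x \<in> gverts k"
  by (simp add: swt_def sw_gverts)

lemma prob_coins: "prob_space coins"
  unfolding coins_def by (intro prob_space_PiM prob_space_measure_pmf)

lemma prob_rand: "prob_space (rand_space k)"
  unfolding rand_space_def by (intro prob_space_PiM prob_coins)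

theorem lemma6p10:
  fixes init :: "nat \<Rightarrow> (nat \<Rightarrow> bool) \<Rightarrow> 's"
    and step :: "'s \<Rightarrow> (nat \<times> 'm) set \<Rightarrow> 's"
    and msg :: "'s \<Rightarrow> nat \<Rightarrow> 'm"
    and out :: "'s \<Rightarrow> nat"
    and k t :: nat
  assumes "1 \<le> k"
    and "\<forall>ident :: gvert \<Rightarrow> nat. inj_on ident (gverts k) \<longrightarrow>
           success_prob k init step msg out ident t > 1/2"
  shows "k \<le> t"
proof (rule ccontr)
  assume "\<not> k \<le> t"
  then have tk: "t < k" by simp
  define G where "G = gverts k"
  define M where "M = rand_space k"
  define psi where "psi = phi \<circ> swt t"
  define tau where "tau = (\<lambda>\<omega>::gvert \<Rightarrow> nat \<Rightarrow> bool. \<lambda>n\<in>G. \<omega> (swt t n))"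
  define E where "E = (\<lambda>ident. {\<omega> \<in> space M.
          proper3 k (\<lambda>v. out (lstate k init step msg ident \<omega> t v))})"
  interpret P: prob_space M unfolding M_def by (rule prob_rand)
  have h1: "measure M (E phi) > 1/2"
    using assms(2) inj_phi unfolding success_prob_def E_def M_def
    by (meson inj_on_subset subset_UNIV)
  have "inj_on psi G" unfolding psi_def
    using inj_phi inj_swt by (meson inj_compose inj_on_subset subset_UNIV)
  then have h2: "measure M (E psi) > 1/2"
    using assms(2) unfolding success_prob_def E_def M_def G_def by blast
  have s1: "E phi \<in> sets M" using h1 measure_notin_sets by fastforce
  have s2: "E psi \<in> sets M" using h2 measure_notin_sets by fastforce
  have meas: "tau \<in> measurable M M"
    unfolding tau_def M_def rand_space_def G_def
  proof (rule measurable_restrict)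
    fix i assume "i \<in> gverts k"
    then have "swt t i \<in> gverts k" using swt_gverts by auto
    then show "(\<lambda>x. x (swt t i)) \<in> measurable (Pi\<^sub>M (gverts k) (\<lambda>_. coins)) coins"
      by (rule measurable_component_singleton)
  qed
  have dist: "distr M M tau = M"
    using distr_PiM_reindex[of G "\<lambda>_. coins" "swt t" G, OF prob_coins inj_on_subset[OF inj_swt subset_UNIV]] swt_gverts
    unfolding M_def rand_space_def tau_def G_def
    by (simp add: Pi_iff)
  define F where "F = tau -` E psi \<inter> space M"
  have sF: "F \<in> sets M" unfolding F_def using meas s2 by measurable
  have mF: "measure M F = measure M (E psi)"
    using measure_distr[OF meas s2] dist F_def by simp
  have disj: "E phi \<inter> F = {}"
  proof (rule ccontr)
    assume "E phi \<inter> F \<noteq> {}"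
    then obtain \<omega> where w: "\<omega> \<in> space M" "\<omega> \<in> E phi" "tau \<omega> \<in> E psi"
      unfolding F_def by auto
    have ext: "\<And>y. y \<notin> G \<Longrightarrow> \<omega> y = undefined"
      using w(1) unfolding M_def rand_space_def G_def by (auto simp: space_PiM PiE_def extensional_def)
    define c where "c = (\<lambda>v. out (lstate k init step msg phi \<omega> t v))"
    define c' where "c' = (\<lambda>v. out (lstate k init step msg psi (tau \<omega>) t v))"
    have pc: "proper3 k c" using w(2) unfolding E_def c_def by auto
    have pc': "proper3 k c'" using w(3) unfolding E_def c'_def by auto
    have f1: "lstate k init step msg psi (tau \<omega>) t (GV k) = lstate k init step msg phi \<omega> t (GU k)"
    proof -
      have "lstate k init step msg psi (tau \<omega>) t (GV k)
          = lstate k init step msg (phi \<circ> sw) (\<omega> \<circ> sw) t (GV k)"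
      proof (rule locality, intro allI impI)
        fix y assume "\<bar>lev y - lev (GV k)\<bar> \<le> int t"
        then have "lev y > int t" using tk by simp
        then have sy: "swt t y = sw y" by (simp add: swt_def)
        show "psi y = (phi \<circ> sw) y \<and> tau \<omega> y = (\<omega> \<circ> sw) y"
        proof
          show "psi y = (phi \<circ> sw) y" using sy psi_def by simp
          show "tau \<omega> y = (\<omega> \<circ> sw) y"
          proof (cases "y \<in> G")
            case True then show ?thesis using sy tau_def by simp
          next
            case False
            then have "sw y \<notin> G" using sw_gverts G_def by auto
            then show ?thesis using False ext tau_def by simp
          qed
        qed
      qed
      also have "\<dots> = lstate k init step msg phi \<omega> t (GU k)"
        using automorph[of k init step msg phi \<omega> t "GV k"] by simp
      finally show ?thesis .
    qed
    have f3: "lstate k init step msg psi (tau \<omega>) t (GV 0) = lstate k init step msg phi \<omega> t (GV 0)"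
    proof (rule locality, intro allI impI)
      fix y assume "\<bar>lev y - lev (GV 0)\<bar> \<le> int t"
      then have "\<not> lev y > int t" by simp
      then have sy: "swt t y = y" by (simp add: swt_def)
      show "psi y = phi y \<and> tau \<omega> y = \<omega> y"
        using sy ext psi_def tau_def by auto
    qed
    have "c' (GV k) = c' (GV 0)" using chainV[OF pc' order_refl] .
    then have "c (GU k) = c (GV 0)" using f1 f3 unfolding c_def c'_def by simp
    moreover have "c (GU k) = c (GU 0)" using chainU[OF pc order_refl] .
    ultimately show False using base_ne[OF pc] by simp
  qed
  have "measure M (E phi \<union> F) = measure M (E phi) + measure M F"
    using P.finite_measure_Union[OF s1 sF disj] .
  moreover have "measure M (E phi \<union> F) \<le> 1" by (rule P.prob_le_1)
  ultimately show False using h1 h2 mF by simp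
qed

end
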